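(* Let $\pi\in\mathfrak M'_S$, put $V_0=\mathrm{Im}(\pi)$, let $i,j\in V_0$ be orthonormal, $k=i\times j$, let $\ell\in V_0^\perp$ be a unit vector, and set $v_0=\ell$, $v_1=i\times\ell$, $v_2=j\times\ell$, $v_3=k\times\ell$. Then for any $(a_0,a_1,a_2,a_3),(b_0,b_1,b_2,b_3)\in\mathbb R^4$ there is a unique $d\in T_\pi(\mathfrak M'_S)$ with $d(i)=\sum_{r=0}^3 a_rv_r$ and $d(j)=\sum_{r=0}^3 b_rv_r$. Consequently $\dim T_\pi(\mathfrak M'_S)=8$. Moreover, $T_\pi(\mathfrak M'_S)$ is a Lie triple subsystem of $T_\pi(\mathrm{Gr}_3(\mathbb R^7))$ (with triple product $[[d_1,d_2],d_3]$).
   Context: Let $\langle\cdot,\cdot\rangle$ be the standard inner product on $\mathbb R^7$ and $\times$ the cross product on $\mathbb R^7$ determined by $e_i\times e_{i+1}=e_{i+3}$, $e_{i+1}\times e_{i+3}=e_i$, $e_{i+3}\times e_i=e_{i+1}$ (indices mod 7, anticommutative, bilinear). Let $\Omega(x,y,z)=\langle x\times y,z\rangle$. $\mathrm{Gr}_3(\mathbb R^7)=\{\pi\in\mathrm{End}(\mathbb R^7):\pi^2=\pi,\ \pi^\sharp=\pi,\ \mathrm{tr}\,\pi=3\}$ ($\sharp$ = adjoint w.r.t. $\langle\cdot,\cdot\rangle$), and $\mathfrak M'_S=\{\pi\in\mathrm{Gr}_3(\mathbb R^7):\ \Omega(\pi x,\pi y,(1-\pi)z)=0\ \forall x,y,z\}$,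 equivalently the orthogonal projections onto $3$-dimensional subspaces $V$ with $V\times V\subseteq V$. $T_\pi(\mathrm{Gr}_3(\mathbb R^7))=\{d\in\mathrm{End}(\mathbb R^7): d\pi+\pi d=d,\ d^\sharp=d,\ \mathrm{tr}\,d=0\}$, and $T_\pi(\mathfrak M'_S)=\{d\in T_\pi(\mathrm{Gr}_3(\mathbb R^7)):\ d(x\times y)=d(x)\times y+x\times d(y)\ \forall x,y\in\mathrm{Im}(\pi)\}$. *)

theory Defs
  imports "HOL-Analysis.Analysis" "HOL-Library.Numeral_Type"
begin

text \<open>R^7 is modelled as real^7, with basis vectors e_a = axis a 1 indexed by the
  ring Z/7Z (the numeral type 7), so that index arithmetic is modulo 7.
  Endomorphisms of R^7 are 7x7 real matrices acting by matrix-vector product;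
  the adjoint w.r.t. the standard inner product is the transpose.\<close>

definition e7 :: "7 \<Rightarrow> real^7" where
  "e7 a = axis a 1"

text \<open>Cross product of basis vectors: e_i x e_(i+1) = e_(i+3), e_(i+1) x e_(i+3) = e_i,
  e_(i+3) x e_i = e_(i+1), extended by anticommutativity; all other products of basis
  vectors (in particular e_a x e_a) are zero.\<close>
definition cross_basis :: "7 \<Rightarrow> 7 \<Rightarrow> real^7" where
  "cross_basis a b =
     (if b = a + 1 then e7 (a + 3)
      else if a = b + 1 then - e7 (b + 3)
      else if b = a + 2 then e7 (a - 1)
      else if a = b + 2 then - e7 (b - 1)
      else if a = b + 3 then e7 (b + 1)
      else if b = a + 3 then - e7 (a + 1)
      else 0)"

definition cross7 :: "real^7 \<Rightarrow> real^7 \<Rightarrow> real^7" where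
  "cross7 x y = (\<Sum>a\<in>UNIV. \<Sum>b\<in>UNIV. (x$a * y$b) *\<^sub>R cross_basis a b)"

definition Omega7 :: "real^7 \<Rightarrow> real^7 \<Rightarrow> real^7 \<Rightarrow> real" where
  "Omega7 x y z = (cross7 x y) \<bullet> z"

definition Gr3 :: "(real^7^7) set" where
  "Gr3 = {p. p ** p = p \<and> transpose p = p \<and> trace p = 3}"

definition MS' :: "(real^7^7) set" where
  "MS' = {p \<in> Gr3. \<forall>x y z. Omega7 (p *v x) (p *v y) ((mat 1 - p) *v z) = 0}"

definition TGr3 :: "real^7^7 \<Rightarrow> (real^7^7) set" where
  "TGr3 p = {d. d ** p + p ** d = d \<and> transpose d = d \<and> trace d = 0}"

definition TMS' :: "real^7^7 \<Rightarrow> (real^7^7) set" where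
  "TMS' p = {d \<in> TGr3 p. \<forall>x\<in>range ((*v) p). \<forall>y\<in>range ((*v) p).
      d *v (cross7 x y) = cross7 (d *v x) y + cross7 x (d *v y)}"

definition bracket :: "real^7^7 \<Rightarrow> real^7^7 \<Rightarrow> real^7^7" where
  "bracket a b = a ** b - b ** a"

text \<open>A Lie triple subsystem of T: a linear subspace of T closed under [[d1,d2],d3].\<close>
definition lie_triple_subsystem :: "(real^7^7) set \<Rightarrow> (real^7^7) set \<Rightarrow> bool" where
  "lie_triple_subsystem S T \<longleftrightarrow> subspace S \<and> S \<subseteq> T \<and>
     (\<forall>d1\<in>S. \<forall>d2\<in>S. \<forall>d3\<in>S. bracket (bracket d1 d2) d3 \<in> S)"

end

theory Submission
  imports Defs
begin

(* ---- from Base.thy ---- *)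

lemma UNIV7: "(UNIV::7 set) = {0,1,2,3,4,5,6}"
proof -
  have "\<And>x::7. x \<in> {0,1,2,3,4,5,6}"
  proof -
    fix x :: 7
    show "x \<in> {0,1,2,3,4,5,6}"
    proof (rule bit1.cases[of x])
      fix z :: int assume of_int: "x = of_int z" "0 \<le> z" "z < int CARD(7)"
      then have "z = 0 \<or> z = 1 \<or> z = 2 \<or> z = 3 \<or> z = 4 \<or> z = 5 \<or> z = 6" by simp arith
      then show ?thesis using of_int by auto
    qed
  qed
  then show ?thesis by auto
qed



lemma sum7: "(\<Sum>a\<in>(UNIV::7 set). f a) = f 0 + f 1 + f 2 + f 3 + f 4 + f 5 + f 6"
  unfolding UNIV7 by (simp add: add.assoc)
lemma num7_simps: "(7::7) = 0" "(8::7) = 1" "(9::7) = 2" "(-1::7) = 6" by simp_all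
lemma cb_0_0[simp]: "cross_basis 0 0 = 0" by (simp add: cross_basis_def num7_simps)
lemma cb_0_1[simp]: "cross_basis 0 1 = e7 3" by (simp add: cross_basis_def num7_simps)
lemma cb_0_2[simp]: "cross_basis 0 2 = e7 6" by (simp add: cross_basis_def num7_simps)
lemma cb_0_3[simp]: "cross_basis 0 3 = - e7 1" by (simp add: cross_basis_def num7_simps)
lemma cb_0_4[simp]: "cross_basis 0 4 = e7 5" by (simp add: cross_basis_def num7_simps)
lemma cb_0_5[simp]: "cross_basis 0 5 = - e7 4" by (simp add: cross_basis_def num7_simps)
lemma cb_0_6[simp]: "cross_basis 0 6 = - e7 2" by (simp add: cross_basis_def num7_simps)
lemma cb_1_0[simp]: "cross_basis 1 0 = - e7 3" by (simp add: cross_basis_def num7_simps)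
lemma cb_1_1[simp]: "cross_basis 1 1 = 0" by (simp add: cross_basis_def num7_simps)
lemma cb_1_2[simp]: "cross_basis 1 2 = e7 4" by (simp add: cross_basis_def num7_simps)
lemma cb_1_3[simp]: "cross_basis 1 3 = e7 0" by (simp add: cross_basis_def num7_simps)
lemma cb_1_4[simp]: "cross_basis 1 4 = - e7 2" by (simp add: cross_basis_def num7_simps)
lemma cb_1_5[simp]: "cross_basis 1 5 = e7 6" by (simp add: cross_basis_def num7_simps)
lemma cb_1_6[simp]: "cross_basis 1 6 = - e7 5" by (simp add: cross_basis_def num7_simps)
lemma cb_2_0[simp]: "cross_basis 2 0 = - e7 6" by (simp add: cross_basis_def num7_simps)
lemma cb_2_1[simp]: "cross_basis 2 1 = - e7 4" by (simp add: cross_basis_def num7_simps)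
lemma cb_2_2[simp]: "cross_basis 2 2 = 0" by (simp add: cross_basis_def num7_simps)
lemma cb_2_3[simp]: "cross_basis 2 3 = e7 5" by (simp add: cross_basis_def num7_simps)
lemma cb_2_4[simp]: "cross_basis 2 4 = e7 1" by (simp add: cross_basis_def num7_simps)
lemma cb_2_5[simp]: "cross_basis 2 5 = - e7 3" by (simp add: cross_basis_def num7_simps)
lemma cb_2_6[simp]: "cross_basis 2 6 = e7 0" by (simp add: cross_basis_def num7_simps)
lemma cb_3_0[simp]: "cross_basis 3 0 = e7 1" by (simp add: cross_basis_def num7_simps)
lemma cb_3_1[simp]: "cross_basis 3 1 = - e7 0" by (simp add: cross_basis_def num7_simps)
lemma cb_3_2[simp]: "cross_basis 3 2 = - e7 5" by (simp add: cross_basis_def num7_simps)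
lemma cb_3_3[simp]: "cross_basis 3 3 = 0" by (simp add: cross_basis_def num7_simps)
lemma cb_3_4[simp]: "cross_basis 3 4 = e7 6" by (simp add: cross_basis_def num7_simps)
lemma cb_3_5[simp]: "cross_basis 3 5 = e7 2" by (simp add: cross_basis_def num7_simps)
lemma cb_3_6[simp]: "cross_basis 3 6 = - e7 4" by (simp add: cross_basis_def num7_simps)
lemma cb_4_0[simp]: "cross_basis 4 0 = - e7 5" by (simp add: cross_basis_def num7_simps)
lemma cb_4_1[simp]: "cross_basis 4 1 = e7 2" by (simp add: cross_basis_def num7_simps)
lemma cb_4_2[simp]: "cross_basis 4 2 = - e7 1" by (simp add: cross_basis_def num7_simps)
lemma cb_4_3[simp]: "cross_basis 4 3 = - e7 6" by (simp add: cross_basis_def num7_simps)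
lemma cb_4_4[simp]: "cross_basis 4 4 = 0" by (simp add: cross_basis_def num7_simps)
lemma cb_4_5[simp]: "cross_basis 4 5 = e7 0" by (simp add: cross_basis_def num7_simps)
lemma cb_4_6[simp]: "cross_basis 4 6 = e7 3" by (simp add: cross_basis_def num7_simps)
lemma cb_5_0[simp]: "cross_basis 5 0 = e7 4" by (simp add: cross_basis_def num7_simps)
lemma cb_5_1[simp]: "cross_basis 5 1 = - e7 6" by (simp add: cross_basis_def num7_simps)
lemma cb_5_2[simp]: "cross_basis 5 2 = e7 3" by (simp add: cross_basis_def num7_simps)
lemma cb_5_3[simp]: "cross_basis 5 3 = - e7 2" by (simp add: cross_basis_def num7_simps)
lemma cb_5_4[simp]: "cross_basis 5 4 = - e7 0" by (simp add: cross_basis_def num7_simps)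
lemma cb_5_5[simp]: "cross_basis 5 5 = 0" by (simp add: cross_basis_def num7_simps)
lemma cb_5_6[simp]: "cross_basis 5 6 = e7 1" by (simp add: cross_basis_def num7_simps)
lemma cb_6_0[simp]: "cross_basis 6 0 = e7 2" by (simp add: cross_basis_def num7_simps)
lemma cb_6_1[simp]: "cross_basis 6 1 = e7 5" by (simp add: cross_basis_def num7_simps)
lemma cb_6_2[simp]: "cross_basis 6 2 = - e7 0" by (simp add: cross_basis_def num7_simps)
lemma cb_6_3[simp]: "cross_basis 6 3 = e7 4" by (simp add: cross_basis_def num7_simps)
lemma cb_6_4[simp]: "cross_basis 6 4 = - e7 3" by (simp add: cross_basis_def num7_simps)
lemma cb_6_5[simp]: "cross_basis 6 5 = - e7 1" by (simp add: cross_basis_def num7_simps)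
lemma cb_6_6[simp]: "cross_basis 6 6 = 0" by (simp add: cross_basis_def num7_simps)
lemma e7_comp[simp]: "e7 a $ b = (if b = a then 1 else 0)" by (simp add: e7_def axis_def)
lemma cross_c0: "cross7 x y $ 0 = x$1*y$3 - x$3*y$1 + x$2*y$6 - x$6*y$2 + x$4*y$5 - x$5*y$4"
  unfolding cross7_def sum_component vector_scaleR_component sum7 by simp
lemma cross_c1: "cross7 x y $ 1 = x$2*y$4 - x$4*y$2 + x$3*y$0 - x$0*y$3 + x$5*y$6 - x$6*y$5"
  unfolding cross7_def sum_component vector_scaleR_component sum7 by simp
lemma cross_c2: "cross7 x y $ 2 = x$3*y$5 - x$5*y$3 + x$4*y$1 - x$1*y$4 + x$6*y$0 - x$0*y$6"
  unfolding cross7_def sum_component vector_scaleR_component sum7 by simp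
lemma cross_c3: "cross7 x y $ 3 = x$4*y$6 - x$6*y$4 + x$5*y$2 - x$2*y$5 + x$0*y$1 - x$1*y$0"
  unfolding cross7_def sum_component vector_scaleR_component sum7 by simp
lemma cross_c4: "cross7 x y $ 4 = x$5*y$0 - x$0*y$5 + x$6*y$3 - x$3*y$6 + x$1*y$2 - x$2*y$1"
  unfolding cross7_def sum_component vector_scaleR_component sum7 by simp
lemma cross_c5: "cross7 x y $ 5 = x$6*y$1 - x$1*y$6 + x$0*y$4 - x$4*y$0 + x$2*y$3 - x$3*y$2"
  unfolding cross7_def sum_component vector_scaleR_component sum7 by simp
lemma cross_c6: "cross7 x y $ 6 = x$0*y$2 - x$2*y$0 + x$1*y$5 - x$5*y$1 + x$3*y$4 - x$4*y$3"
  unfolding cross7_def sum_component vector_scaleR_component sum7 by simp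


lemma forall7: "(\<forall>c::7. P c) \<longleftrightarrow> P 0 \<and> P 1 \<and> P 2 \<and> P 3 \<and> P 4 \<and> P 5 \<and> P 6"
  by (metis UNIV7 UNIV_I empty_iff insert_iff)
lemma vec7_eq: "(x::real^7) = y \<longleftrightarrow> x$0 = y$0 \<and> x$1 = y$1 \<and> x$2 = y$2 \<and> x$3 = y$3 \<and> x$4 = y$4 \<and> x$5 = y$5 \<and> x$6 = y$6"
  by (simp add: vec_eq_iff forall7)
lemma inner7: "(x::real^7) \<bullet> y = x$0*y$0 + x$1*y$1 + x$2*y$2 + x$3*y$3 + x$4*y$4 + x$5*y$5 + x$6*y$6"
  by (simp add: inner_vec_def sum7)
lemmas cross_cs = cross_c0 cross_c1 cross_c2 cross_c3 cross_c4 cross_c5 cross_c6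
lemma cross_anti: "cross7 x y = - cross7 y x"
  by (simp add: vec7_eq cross_cs)
lemma cross_add1: "cross7 (x + y) z = cross7 x z + cross7 y z"
  by (simp add: vec7_eq cross_cs algebra_simps)
lemma cross_scale1: "cross7 (a *\<^sub>R x) z = a *\<^sub>R cross7 x z"
  by (simp add: vec7_eq cross_cs algebra_simps)
lemma cross_cyc: "cross7 x y \<bullet> z = x \<bullet> cross7 y z"
  by (simp add: inner7 cross_cs algebra_simps)
lemma cross_P: "cross7 a (cross7 c d) + cross7 c (cross7 a d) = (a \<bullet> d) *\<^sub>R c + (c \<bullet> d) *\<^sub>R a - (2*(a \<bullet> c)) *\<^sub>R d"
  by (simp add: vec7_eq inner7 cross_cs algebra_simps)


(* ---- from PartA.thy ---- *)


lemma cross_L1: "cross7 a (cross7 a d) = (a \<bullet> d) *\<^sub>R a - (a \<bullet> a) *\<^sub>R d"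
  by (simp add: vec7_eq inner7 cross_cs algebra_simps)
lemma cross_L4: "cross7 a b \<bullet> cross7 a d = (a \<bullet> a) * (b \<bullet> d) - (a \<bullet> b) * (a \<bullet> d)"
  by (simp add: inner7 cross_cs algebra_simps)
lemma cross_C: "cross7 x (cross7 y z) = - cross7 (cross7 x y) z + (2 * (x \<bullet> z)) *\<^sub>R y - (y \<bullet> z) *\<^sub>R x - (x \<bullet> y) *\<^sub>R z"
  by (simp add: vec7_eq inner7 cross_cs algebra_simps)
lemma cross_add2: "cross7 z (x + y) = cross7 z x + cross7 z y"
  by (simp add: vec7_eq cross_cs algebra_simps)
lemma cross_scale2: "cross7 z (a *\<^sub>R x) = a *\<^sub>R cross7 z x"
  by (simp add: vec7_eq cross_cs algebra_simps)
lemma cross_diff1: "cross7 (x - y) z = cross7 x z - cross7 y z"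
  by (simp add: vec7_eq cross_cs algebra_simps)
lemma cross_diff2: "cross7 z (x - y) = cross7 z x - cross7 z y"
  by (simp add: vec7_eq cross_cs algebra_simps)
lemma cross_neg1: "cross7 (- x) z = - cross7 x z"
  by (simp add: vec7_eq cross_cs algebra_simps)
lemma cross_neg2: "cross7 z (- x) = - cross7 z x"
  by (simp add: vec7_eq cross_cs algebra_simps)
lemma cross_zero1[simp]: "cross7 0 z = 0"
  by (simp add: vec7_eq cross_cs)
lemma cross_zero2[simp]: "cross7 z 0 = 0"
  by (simp add: vec7_eq cross_cs)
lemma cross_self[simp]: "cross7 z z = 0"
  by (simp add: vec7_eq cross_cs)
lemmas cross_lin = cross_add1 cross_add2 cross_scale1 cross_scale2 cross_diff1 cross_diff2 cross_neg1 cross_neg2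

definition mkD :: "real^7 \<Rightarrow> real^7 \<Rightarrow> real^7 \<Rightarrow> real^7 \<Rightarrow> real^7^7" where
  "mkD i j ui uj = (let k = cross7 i j; uk = cross7 ui j + cross7 i uj in
     (\<chi> r c. i$c*ui$r + ui$c*i$r + j$c*uj$r + uj$c*j$r + k$c*uk$r + uk$c*k$r))"

lemma mkD_mult: "mkD i j ui uj *v x = (i \<bullet> x) *\<^sub>R ui + (ui \<bullet> x) *\<^sub>R i + (j \<bullet> x) *\<^sub>R uj + (uj \<bullet> x) *\<^sub>R j
   + (cross7 i j \<bullet> x) *\<^sub>R (cross7 ui j + cross7 i uj) + ((cross7 ui j + cross7 i uj) \<bullet> x) *\<^sub>R cross7 i j"
  by (simp add: mkD_def Let_def vec_eq_iff matrix_vector_mult_def inner_vec_def sum.distrib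
      sum_distrib_left sum_distrib_right algebra_simps)

lemma mkD_transpose: "transpose (mkD i j ui uj) = mkD i j ui uj"
  by (simp add: mkD_def Let_def transpose_def vec_eq_iff algebra_simps)

definition p0 :: "real^7^7" where
  "p0 = (\<chi> r c. if r = c \<and> (r = 0 \<or> r = 1 \<or> r = 3) then 1 else 0)"

lemma p0_mult: "p0 *v x = x$0 *\<^sub>R e7 0 + x$1 *\<^sub>R e7 1 + x$3 *\<^sub>R e7 3"
  by (simp add: p0_def vec7_eq matrix_vector_mult_def sum7)

definition vecA :: "real^4 \<Rightarrow> real^7" where
  "vecA a = a$0 *\<^sub>R e7 2 + a$1 *\<^sub>R e7 6 + a$2 *\<^sub>R e7 4 - a$3 *\<^sub>R e7 5"

definition Mk :: "real^4 \<Rightarrow> real^4 \<Rightarrow> real^7^7" where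
  "Mk a b = mkD (e7 0) (e7 1) (vecA a) (vecA b)"

lemma Mk_c0: "(Mk a b *v x)$0 = a$0*x$2 + a$2*x$4 - a$3*x$5 + a$1*x$6"
  by (simp add: Mk_def mkD_mult vecA_def inner7 cross_cs algebra_simps)
lemma Mk_c1: "(Mk a b *v x)$1 = b$0*x$2 + b$2*x$4 - b$3*x$5 + b$1*x$6"
  by (simp add: Mk_def mkD_mult vecA_def inner7 cross_cs algebra_simps)
lemma Mk_c2: "(Mk a b *v x)$2 = a$0*x$0 + b$0*x$1 + (a$2 - b$1)*x$3"
  by (simp add: Mk_def mkD_mult vecA_def inner7 cross_cs algebra_simps)
lemma Mk_c3: "(Mk a b *v x)$3 = (a$2-b$1)*x$2 + (b$3 - a$0)*x$4 + (a$1+b$2)*x$5 + (a$3+b$0)*x$6"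
  by (simp add: Mk_def mkD_mult vecA_def inner7 cross_cs algebra_simps)
lemma Mk_c4: "(Mk a b *v x)$4 = a$2*x$0 + b$2*x$1 + (b$3 - a$0)*x$3"
  by (simp add: Mk_def mkD_mult vecA_def inner7 cross_cs algebra_simps)
lemma Mk_c5: "(Mk a b *v x)$5 = - a$3*x$0 - b$3*x$1 + (a$1+b$2)*x$3"
  by (simp add: Mk_def mkD_mult vecA_def inner7 cross_cs algebra_simps)
lemma Mk_c6: "(Mk a b *v x)$6 = a$1*x$0 + b$1*x$1 + (a$3+b$0)*x$3"
  by (simp add: Mk_def mkD_mult vecA_def inner7 cross_cs algebra_simps)
lemmas Mk_cs = Mk_c0 Mk_c1 Mk_c2 Mk_c3 Mk_c4 Mk_c5 Mk_c6
lemma p0_c: "(p0 *v x)$0 = x$0" "(p0 *v x)$1 = x$1" "(p0 *v x)$2 = 0" "(p0 *v x)$3 = x$3"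
  "(p0 *v x)$4 = 0" "(p0 *v x)$5 = 0" "(p0 *v x)$6 = 0"
  by (simp_all add: p0_mult)

lemma G0: "Mk a b *v (2 *\<^sub>R (p0 *v cross7 x y) - cross7 x y) =
   cross7 (Mk a b *v (2 *\<^sub>R (p0 *v x) - x)) y + cross7 x (Mk a b *v (2 *\<^sub>R (p0 *v y) - y))"
  by (simp add: vec7_eq Mk_cs p0_c cross_cs algebra_simps)


(* ---- from PartB.thy ---- *)


lemma col7: "(A *v e7 c)$r = A$r$c"
  by (simp add: matrix_vector_mul_component e7_def inner_axis)

lemma cols_eq: "(\<And>c. (A::real^7^7) *v e7 c = B *v e7 c) \<Longrightarrow> A = B"
  by (metis col7 vec_eq_iff)

lemma Mk_e0: "Mk a b *v e7 0 = vecA a"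
  by (simp add: vec7_eq Mk_cs vecA_def)
lemma Mk_e1: "Mk a b *v e7 1 = vecA b"
  by (simp add: vec7_eq Mk_cs vecA_def)

lemma mult_add_mv: "((A::real^7^7) + B) *v x = A *v x + B *v x"
  by (simp add: matrix_vector_mult_def vec_eq_iff sum.distrib algebra_simps)

lemma cols_eq7: "(A::real^7^7) *v e7 0 = B *v e7 0 \<Longrightarrow> A *v e7 1 = B *v e7 1 \<Longrightarrow> A *v e7 2 = B *v e7 2
  \<Longrightarrow> A *v e7 3 = B *v e7 3 \<Longrightarrow> A *v e7 4 = B *v e7 4 \<Longrightarrow> A *v e7 5 = B *v e7 5 \<Longrightarrow> A *v e7 6 = B *v e7 6 \<Longrightarrow> A = B"
proof (rule cols_eq)
  fix c :: 7
  assume a: "A *v e7 0 = B *v e7 0" "A *v e7 1 = B *v e7 1" "A *v e7 2 = B *v e7 2"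
   "A *v e7 3 = B *v e7 3" "A *v e7 4 = B *v e7 4" "A *v e7 5 = B *v e7 5" "A *v e7 6 = B *v e7 6"
  have "c \<in> {0,1,2,3,4,5,6}" by (simp only: UNIV7[symmetric] UNIV_I)
  then show "A *v e7 c = B *v e7 c" using a by blast
qed
lemma Mk_trace: "trace (Mk a b) = 0"
    by (simp add: trace_def sum7 col7[symmetric] Mk_cs)

lemma Mk_TGr: "Mk a b \<in> TGr3 p0"
proof -
  have "Mk a b ** p0 + p0 ** Mk a b = Mk a b"
    by (rule cols_eq7) (simp_all add: mult_add_mv matrix_vector_mul_assoc[symmetric] vec7_eq Mk_cs p0_c)
  moreover have "transpose (Mk a b) = Mk a b" by (simp add: Mk_def mkD_transpose)
  ultimately show ?thesis using Mk_trace by (simp add: TGr3_def)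
qed

lemma Mk_TMS: "Mk a b \<in> TMS' p0"
proof -
  have "Mk a b *v cross7 x y = cross7 (Mk a b *v x) y + cross7 x (Mk a b *v y)"
    if hxy: "x \<in> range ((*v) p0)" "y \<in> range ((*v) p0)" for x y
  proof -
    obtain x' y' where "x = p0 *v x'" "y = p0 *v y'" using hxy by blast
    then show ?thesis by (simp add: vec7_eq Mk_cs p0_c cross_cs algebra_simps)
  qed
  then show ?thesis using Mk_TGr by (simp add: TMS'_def)
qed

definition coefA :: "real^7 \<Rightarrow> real^4" where
  "coefA v = (\<chi> q. if q = 0 then v$2 else if q = 1 then v$6 else if q = 2 then v$4 else - v$5)"
lemma coefA_c: "(coefA v)$0 = v$2" "(coefA v)$1 = v$6" "(coefA v)$2 = v$4" "(coefA v)$3 = - v$5"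
  by (simp_all add: coefA_def)

lemma p0_e: "p0 *v e7 0 = e7 0" "p0 *v e7 1 = e7 1" "p0 *v e7 3 = e7 3"
  "p0 *v e7 2 = 0" "p0 *v e7 4 = 0" "p0 *v e7 5 = 0" "p0 *v e7 6 = 0"
  by (simp_all add: vec7_eq p0_c)

lemma TMS0_char:
  assumes "d \<in> TMS' p0"
  shows "d = Mk (coefA (d *v e7 0)) (coefA (d *v e7 1))"
proof -
  have blk: "d ** p0 + p0 ** d = d" and sym: "transpose d = d"
    and der: "\<And>x y. x \<in> range ((*v) p0) \<Longrightarrow> y \<in> range ((*v) p0) \<Longrightarrow>
        d *v (cross7 x y) = cross7 (d *v x) y + cross7 x (d *v y)"
    using assms by (auto simp: TMS'_def TGr3_def)
  have col: "d *v (p0 *v e7 c) + p0 *v (d *v e7 c) = d *v e7 c" for c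
  proof -
    have "(d ** p0 + p0 ** d) *v e7 c = d *v e7 c" using blk by simp
    then show ?thesis by (simp only: mult_add_mv matrix_vector_mul_assoc[symmetric])
  qed
  have V: "(d *v e7 c)$0 = 0 \<and> (d *v e7 c)$1 = 0 \<and> (d *v e7 c)$3 = 0" if "p0 *v e7 c = e7 c" for c
    using col[of c] that by (simp add: vec7_eq p0_c)
  have W: "(d *v e7 c)$2 = 0 \<and> (d *v e7 c)$4 = 0 \<and> (d *v e7 c)$5 = 0 \<and> (d *v e7 c)$6 = 0" if "p0 *v e7 c = 0" for c
    using col[of c] that by (simp add: vec7_eq p0_c)
  have Z: "d$0$0 = 0" "d$0$1 = 0" "d$0$3 = 0" "d$1$0 = 0" "d$1$1 = 0" "d$1$3 = 0" "d$2$2 = 0" "d$2$4 = 0" "d$2$5 = 0" "d$2$6 = 0" "d$3$0 = 0" "d$3$1 = 0" "d$3$3 = 0" "d$4$2 = 0" "d$4$4 = 0" "d$4$5 = 0" "d$4$6 = 0" "d$5$2 = 0" "d$5$4 = 0" "d$5$5 = 0" "d$5$6 = 0" "d$6$2 = 0" "d$6$4 = 0" "d$6$5 = 0" "d$6$6 = 0"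
    using V[OF p0_e(1)] V[OF p0_e(2)] V[OF p0_e(3)] W[OF p0_e(4)] W[OF p0_e(5)] W[OF p0_e(6)] W[OF p0_e(7)]
    by (simp_all add: col7)
  have symE: "d$r$c = d$c$r" for r c
    using arg_cong[OF sym, of "\<lambda>M. M$r$c"] by (simp add: transpose_def)
  have S: "d$0$2 = d$2$0" "d$0$4 = d$4$0" "d$0$5 = d$5$0" "d$0$6 = d$6$0" "d$1$2 = d$2$1" "d$1$4 = d$4$1" "d$1$5 = d$5$1" "d$1$6 = d$6$1" "d$3$2 = d$2$3" "d$3$4 = d$4$3" "d$3$5 = d$5$3" "d$3$6 = d$6$3"
    by (rule symE)+
  have e3: "cross7 (e7 0) (e7 1) = e7 3" by (simp add: vec7_eq cross_cs)
  have D3: "d *v e7 3 = cross7 (d *v e7 0) (e7 1) + cross7 (e7 0) (d *v e7 1)"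
  proof -
    have r0: "e7 0 \<in> range ((*v) p0)" by (rule range_eqI[of _ _ "e7 0"]) (simp add: p0_e)
    have r1: "e7 1 \<in> range ((*v) p0)" by (rule range_eqI[of _ _ "e7 1"]) (simp add: p0_e)
    show ?thesis using der[OF r0 r1] e3 by simp
  qed
  have C3: "d$2$3 = (d *v e7 3)$2" "d$4$3 = (d *v e7 3)$4" "d$5$3 = (d *v e7 3)$5" "d$6$3 = (d *v e7 3)$6"
    by (simp_all add: col7)
  show ?thesis
    by (rule cols_eq7) (simp_all add: vec7_eq col7[of d] Mk_cs coefA_c Z S C3 D3 cross_cs)
qed


lemma comm_der:
  assumes D1: "\<And>x y. D1 (cross7 x y) = cross7 (D1 x) y + cross7 x (D1 y)"
    and D2: "\<And>x y. D2 (cross7 x y) = cross7 (D2 x) y + cross7 x (D2 y)"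
    and L1: "\<And>u v. D1 (u + v) = D1 u + D1 v"
    and L2: "\<And>u v. D2 (u + v) = D2 u + D2 v"
  shows "D1 (D2 (cross7 x y)) - D2 (D1 (cross7 x y)) = cross7 (D1 (D2 x) - D2 (D1 x)) y + cross7 x (D1 (D2 y) - D2 (D1 y))"
  by (simp add: D1 D2 L1 L2 cross_diff1 cross_diff2 algebra_simps)

lemma sMk: "Mk a b *v (2 *\<^sub>R (p0 *v z) - z) = - (2 *\<^sub>R (p0 *v (Mk a b *v z)) - Mk a b *v z)"
  by (simp add: vec7_eq Mk_cs p0_c algebra_simps)
lemma p0_idem: "p0 *v (p0 *v z) = p0 *v z"
  by (simp add: vec7_eq p0_c)

definition s0 :: "real^7 \<Rightarrow> real^7" where "s0 z = 2 *\<^sub>R (p0 *v z) - z"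
lemma s0_neg: "s0 (- u) = - s0 u" by (simp add: s0_def vec7_eq p0_c)
lemma s0_s0: "s0 (s0 u) = u" by (simp add: s0_def vec7_eq p0_c)
lemma sMk': "Mk a b *v s0 z = - s0 (Mk a b *v z)" by (simp add: s0_def sMk)
lemma mv_neg: "(A::real^7^7) *v (- u) = - (A *v u)" by (simp add: vec_eq_iff matrix_vector_mult_def sum_negf)

lemma X_der:
  "Mk a1 b1 *v (Mk a2 b2 *v cross7 x y) - Mk a2 b2 *v (Mk a1 b1 *v cross7 x y) =
   cross7 (Mk a1 b1 *v (Mk a2 b2 *v x) - Mk a2 b2 *v (Mk a1 b1 *v x)) y
 + cross7 x (Mk a1 b1 *v (Mk a2 b2 *v y) - Mk a2 b2 *v (Mk a1 b1 *v y))"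
proof -
  define D1 where "D1 z = Mk a1 b1 *v s0 z" for z
  define D2 where "D2 z = Mk a2 b2 *v s0 z" for z
  have C: "D1 (D2 (cross7 x y)) - D2 (D1 (cross7 x y)) = cross7 (D1 (D2 x) - D2 (D1 x)) y + cross7 x (D1 (D2 y) - D2 (D1 y))"
    apply (rule comm_der)
       apply (simp only: D1_def G0[folded s0_def])
      apply (simp only: D2_def G0[folded s0_def])
     apply (simp_all add: D1_def D2_def s0_def algebra_simps)
    done
  have e1: "D1 (D2 z) = - (Mk a1 b1 *v (Mk a2 b2 *v z))" for z
    by (simp only: D1_def D2_def sMk' s0_neg s0_s0 mv_neg)
  have e2: "D2 (D1 z) = - (Mk a2 b2 *v (Mk a1 b1 *v z))" for z
    by (simp only: D1_def D2_def sMk' s0_neg s0_s0 mv_neg)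
  show ?thesis using C by (simp add: e1 e2 cross_neg1 cross_neg2 cross_diff1 cross_diff2 algebra_simps)
qed

lemma TGr_blk: "d \<in> TGr3 p \<Longrightarrow> d *v (p *v z) = d *v z - p *v (d *v z)"
proof -
  assume "d \<in> TGr3 p"
  then have "(d ** p + p ** d) *v z = d *v z" by (simp add: TGr3_def)
  then have "d *v (p *v z) + p *v (d *v z) = d *v z" by (simp only: mult_add_mv matrix_vector_mul_assoc)
  then show ?thesis by (simp add: algebra_simps)
qed

lemma transpose_diff7: "transpose ((A::real^7^7) - B) = transpose A - transpose B"
  by (simp add: transpose_def vec_eq_iff)

lemma bracket_mv: "bracket A B *v z = (A::real^7^7) *v (B *v z) - B *v (A *v z)"
  by (simp add: bracket_def matrix_vector_mult_diff_rdistrib matrix_vector_mul_assoc)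

lemma LT0:
  assumes h1: "d1 \<in> TMS' p0" and h2: "d2 \<in> TMS' p0" and h3: "d3 \<in> TMS' p0"
  shows "bracket (bracket d1 d2) d3 \<in> TMS' p0"
proof -
  have g1: "d1 \<in> TGr3 p0" and g2: "d2 \<in> TGr3 p0" and g3: "d3 \<in> TGr3 p0"
    using h1 h2 h3 by (auto simp: TMS'_def)
  have t1: "transpose d1 = d1" and t2: "transpose d2 = d2" and t3: "transpose d3 = d3"
    using g1 g2 g3 by (auto simp: TGr3_def)
  have der3: "d3 *v cross7 x y = cross7 (d3 *v x) y + cross7 x (d3 *v y)"
    if "x \<in> range ((*v) p0)" "y \<in> range ((*v) p0)" for x y
    using h3 that by (auto simp: TMS'_def)
  define X where "X = bracket d1 d2"
  define Y where "Y = bracket X d3"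
  have Xv: "X *v z = d1 *v (d2 *v z) - d2 *v (d1 *v z)" for z
    by (simp add: X_def bracket_mv)
  have Yv: "Y *v z = X *v (d3 *v z) - d3 *v (X *v z)" for z
    by (simp add: Y_def bracket_mv)
  have Xp: "X *v (p0 *v z) = p0 *v (X *v z)" for z
    by (simp add: Xv TGr_blk[OF g1] TGr_blk[OF g2] matrix_vector_mult_diff_distrib)
  have blk: "Y ** p0 + p0 ** Y = Y"
  proof (subst matrix_eq, intro allI)
    fix z
    show "(Y ** p0 + p0 ** Y) *v z = Y *v z"
      by (simp add: mult_add_mv matrix_vector_mul_assoc[symmetric] Yv TGr_blk[OF g3] Xp
          matrix_vector_mult_diff_distrib)
  qed
  have tr: "transpose Y = Y"
  proof -
    have "transpose Y = d3 ** transpose X - transpose X ** d3"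
      by (simp add: Y_def bracket_def transpose_diff7 matrix_transpose_mul t3)
    also have "transpose X = d2 ** d1 - d1 ** d2"
      by (simp add: X_def bracket_def transpose_diff7 matrix_transpose_mul t1 t2)
    finally show ?thesis
      by (subst matrix_eq) (simp add: Yv Xv matrix_vector_mult_diff_rdistrib matrix_vector_mult_diff_distrib
          matrix_vector_mul_assoc[symmetric])
  qed
  have trc: "trace Y = 0"
    using trace_mul_sym[of X d3] by (simp add: Y_def bracket_def trace_sub)
  obtain a1 b1 a2 b2 where e1: "d1 = Mk a1 b1" and e2: "d2 = Mk a2 b2"
    using TMS0_char[OF h1] TMS0_char[OF h2] by (rule that)
  have Xder: "X *v cross7 u v = cross7 (X *v u) v + cross7 u (X *v v)" for u v
    using X_der[of a1 b1 a2 b2 u v] by (simp add: Xv e1 e2)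
  have der: "Y *v cross7 x y = cross7 (Y *v x) y + cross7 x (Y *v y)"
    if hx: "x \<in> range ((*v) p0)" and hy: "y \<in> range ((*v) p0)" for x y
  proof -
    obtain x' y' where xy: "x = p0 *v x'" "y = p0 *v y'" using hx hy by blast
    have "X *v x = p0 *v (X *v x')" "X *v y = p0 *v (X *v y')" using xy Xp by simp_all
    then have hX: "X *v x \<in> range ((*v) p0)" "X *v y \<in> range ((*v) p0)"
      by (simp_all add: range_eqI)
    have a: "d3 *v cross7 x y = cross7 (d3 *v x) y + cross7 x (d3 *v y)" by (rule der3[OF hx hy])
    have b: "d3 *v cross7 (X *v x) y = cross7 (d3 *v (X *v x)) y + cross7 (X *v x) (d3 *v y)"
      by (rule der3[OF hX(1) hy])
    have c: "d3 *v cross7 x (X *v y) = cross7 (d3 *v x) (X *v y) + cross7 x (d3 *v (X *v y))"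
      by (rule der3[OF hx hX(2)])
    show ?thesis
      by (simp add: Yv a Xder b c matrix_vector_right_distrib cross_diff1 cross_diff2 algebra_simps)
  qed
  show ?thesis
    unfolding Y_def[symmetric] X_def[symmetric] using blk tr trc der by (simp add: TMS'_def TGr3_def)
qed

(* ---- from PartC.thy ---- *)


lemma perp1: "cross7 a b \<bullet> a = 0" by (simp add: inner7 cross_cs algebra_simps)
lemma perp2: "cross7 a b \<bullet> b = 0" by (simp add: inner7 cross_cs algebra_simps)
lemma cycA: "cross7 a b \<bullet> c = cross7 b c \<bullet> a" by (simp add: inner7 cross_cs algebra_simps)
lemma cycB: "cross7 a b \<bullet> c = cross7 c a \<bullet> b" by (simp add: inner7 cross_cs algebra_simps)
lemma L4t: "cross7 b a \<bullet> cross7 d a = (a\<bullet>a)*(b\<bullet>d) - (a\<bullet>b)*(a\<bullet>d)" by (simp add: inner7 cross_cs algebra_simps)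
lemma L4m: "cross7 a b \<bullet> cross7 d a = -((a\<bullet>a)*(b\<bullet>d) - (a\<bullet>b)*(a\<bullet>d))" by (simp add: inner7 cross_cs algebra_simps)
lemma L1a: "cross7 (cross7 a b) a = (a\<bullet>a) *\<^sub>R b - (a\<bullet>b) *\<^sub>R a" by (simp add: vec7_eq inner7 cross_cs algebra_simps)
lemma L1b: "cross7 (cross7 a b) b = (a\<bullet>b) *\<^sub>R b - (b\<bullet>b) *\<^sub>R a" by (simp add: vec7_eq inner7 cross_cs algebra_simps)
lemma L1c: "cross7 b (cross7 a b) = (b\<bullet>b) *\<^sub>R a - (a\<bullet>b) *\<^sub>R b" by (simp add: vec7_eq inner7 cross_cs algebra_simps)

lemma frame_facts:
  assumes ii: "i \<bullet> i = 1" and jj: "j \<bullet> j = 1" and ll: "l \<bullet> l = 1"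
    and ij: "i \<bullet> j = 0" and il: "i \<bullet> l = 0" and jl: "j \<bullet> l = 0"
    and hk: "k = cross7 i j" and kl: "k \<bullet> l = 0"
  defines "f4 \<equiv> cross7 j l" and "f5 \<equiv> cross7 l k" and "f6 \<equiv> cross7 i l"
  shows "k \<bullet> k = 1" "f4 \<bullet> f4 = 1" "f5 \<bullet> f5 = 1" "f6 \<bullet> f6 = 1"
    "i \<bullet> k = 0" "j \<bullet> k = 0"
    "f4 \<bullet> i = 0" "f4 \<bullet> j = 0" "f4 \<bullet> l = 0" "f4 \<bullet> k = 0"
    "f5 \<bullet> i = 0" "f5 \<bullet> j = 0" "f5 \<bullet> l = 0" "f5 \<bullet> k = 0"
    "f6 \<bullet> i = 0" "f6 \<bullet> j = 0" "f6 \<bullet> l = 0" "f6 \<bullet> k = 0"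
    "f4 \<bullet> f5 = 0" "f4 \<bullet> f6 = 0" "f5 \<bullet> f6 = 0"
    "cross7 k f4 = f6" "cross7 f4 f5 = i" "cross7 f5 f6 = j" "cross7 f6 i = l"
proof -
  have ki: "cross7 k i = j" using L1a[of i j] by (simp add: hk ii ij)
  have kj: "cross7 k j = - i" using L1b[of i j] by (simp add: hk jj ij)
  have ik: "i \<bullet> k = 0" using perp1[of i j] by (simp add: hk inner_commute)
  have jk: "j \<bullet> k = 0" using perp2[of i j] by (simp add: hk inner_commute)
  have kk: "k \<bullet> k = 1" using cross_L4[of i j j] by (simp add: hk ii jj ij)
  show "k \<bullet> k = 1" "i \<bullet> k = 0" "j \<bullet> k = 0" by (fact kk ik jk)+
  show "f4 \<bullet> f4 = 1" using cross_L4[of j l l] by (simp add: f4_def jj ll jl)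
  show "f5 \<bullet> f5 = 1" using cross_L4[of l k k] by (simp add: f5_def ll kk kl inner_commute)
  show "f6 \<bullet> f6 = 1" using cross_L4[of i l l] by (simp add: f6_def ii ll il)
  show "f4 \<bullet> i = 0" using cycB[of j l i] kl by (simp add: f4_def hk)
  show "f4 \<bullet> j = 0" by (simp add: f4_def perp1)
  show "f4 \<bullet> l = 0" by (simp add: f4_def perp2)
  show "f4 \<bullet> k = 0" using cycB[of j l k] by (simp add: f4_def kj inner_commute il)
  show "f5 \<bullet> i = 0" using cycA[of l k i] by (simp add: f5_def ki jl)
  show "f5 \<bullet> j = 0" using cycA[of l k j] by (simp add: f5_def kj il inner_commute)
  show "f5 \<bullet> l = 0" by (simp add: f5_def perp1)
  show "f5 \<bullet> k = 0" by (simp add: f5_def perp2)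
  show "f6 \<bullet> i = 0" by (simp add: f6_def perp1)
  show "f6 \<bullet> l = 0" by (simp add: f6_def perp2)
  show "f6 \<bullet> j = 0" using cycB[of i l j] cross_anti[of j i] kl by (simp add: f6_def hk)
  show "f6 \<bullet> k = 0" using cycB[of i l k] by (simp add: f6_def ki jl)
  show "f4 \<bullet> f5 = 0" using cross_L4[of l j k] cross_anti[of j l] by (simp add: f4_def f5_def ll jk jl kl inner_commute)
  show "f4 \<bullet> f6 = 0" using L4t[of j l i] by (simp add: f4_def f6_def ll ij jl il inner_commute)
  show "f5 \<bullet> f6 = 0" using L4m[of l k i] by (simp add: f5_def f6_def ll ik kl il inner_commute)
  show "cross7 k f4 = f6" using cross_C[of k j l] by (simp add: f4_def f6_def kj kl jl jk cross_neg1 inner_commute)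
  show "cross7 f6 i = l" using L1a[of i l] by (simp add: f6_def ii il)
  have f4l: "cross7 f4 l = - j" using L1b[of j l] by (simp add: f4_def ll jl)
  have f4k: "f4 \<bullet> k = 0" using cycB[of j l k] by (simp add: f4_def kj inner_commute il)
  have jki: "cross7 j k = i" using kj cross_anti[of j k] by simp
  have f4dl: "f4 \<bullet> l = 0" by (simp add: f4_def perp2)
  have lk: "l \<bullet> k = 0" using kl by (simp add: inner_commute)
  show "cross7 f4 f5 = i" using cross_C[of f4 l k] unfolding f5_def by (simp add: f4l f4k lk f4dl cross_neg1 jki)
  have li: "l \<bullet> i = 0" and ki0: "k \<bullet> i = 0" using il ik by (simp_all add: inner_commute)
  have lki: "cross7 (cross7 l k) i = - cross7 l j" using cross_C[of l k i] by (simp add: ki li ki0 lk)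
  have f5i: "f5 \<bullet> i = 0" using cycA[of l k i] by (simp add: f5_def ki jl)
  have ljl: "cross7 (cross7 l j) l = j" using L1a[of l j] by (simp add: ll jl inner_commute)
  have f5l: "f5 \<bullet> l = 0" by (simp add: f5_def perp1)
  show "cross7 f5 f6 = j" using cross_C[of f5 i l] unfolding f6_def by (simp add: lki[folded f5_def] f5i il f5l cross_neg1 ljl)
qed

lemma line_lemma:
  assumes "a \<bullet> a = 1" "b \<bullet> b = 1" "a \<bullet> b = 0" "cross7 a b = c"
  shows "cross7 b c = a" "cross7 c a = b" "cross7 b a = - c" "cross7 c b = - a" "cross7 a c = - b"
proof -
  show bc: "cross7 b c = a" using L1c[of b a] assms by simp
  show ca: "cross7 c a = b" using L1a[of a b] assms by simp
  show "cross7 b a = - c" using cross_anti[of b a] assms by simp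
  show "cross7 c b = - a" using cross_anti[of c b] bc by simp
  show "cross7 a c = - b" using cross_anti[of a c] ca by simp
qed

definition lin :: "(7 \<Rightarrow> real^7) \<Rightarrow> real^7 \<Rightarrow> real^7" where
  "lin g v = (\<Sum>q\<in>UNIV. v$q *\<^sub>R g q)"

lemma lin_e: "lin g (e7 q) = g q"
proof -
  have "(\<lambda>qa. (e7 q)$qa *\<^sub>R g qa) = (\<lambda>qa. if qa = q then g q else 0)" by (auto simp: e7_comp)
  then have "lin g (e7 q) = (\<Sum>qa\<in>UNIV. if qa = q then g q else 0)" by (simp only: lin_def)
  then show ?thesis by simp
qed
lemma lin_neg: "lin g (- v) = - lin g v"
  by (simp add: lin_def sum_negf)
lemma lin_0: "lin g 0 = 0"
  by (simp add: lin_def)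

lemma table_gen:
  assumes n: "\<And>q. g q \<bullet> g q = 1"
    and o: "g 0 \<bullet> g 1 = 0" "g 1 \<bullet> g 2 = 0" "g 2 \<bullet> g 3 = 0" "g 3 \<bullet> g 4 = 0"
           "g 4 \<bullet> g 5 = 0" "g 5 \<bullet> g 6 = 0" "g 6 \<bullet> g 0 = 0"
    and c: "cross7 (g 0) (g 1) = g 3" "cross7 (g 1) (g 2) = g 4" "cross7 (g 2) (g 3) = g 5"
           "cross7 (g 3) (g 4) = g 6" "cross7 (g 4) (g 5) = g 0" "cross7 (g 5) (g 6) = g 1"
           "cross7 (g 6) (g 0) = g 2"
  shows "cross7 (g a) (g b) = lin g (cross_basis a b)"
proof -
  note L0 = line_lemma[OF n n o(1) c(1)]
  note L1 = line_lemma[OF n n o(2) c(2)]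
  note L2 = line_lemma[OF n n o(3) c(3)]
  note L3 = line_lemma[OF n n o(4) c(4)]
  note L4 = line_lemma[OF n n o(5) c(5)]
  note L5 = line_lemma[OF n n o(6) c(6)]
  note L6 = line_lemma[OF n n o(7) c(7)]
  have "\<forall>a b. cross7 (g a) (g b) = lin g (cross_basis a b)"
    unfolding forall7 by (simp add: lin_e lin_neg lin_0 L0 L1 L2 L3 L4 L5 L6 c)
  then show ?thesis by blast
qed

definition frm :: "real^7 \<Rightarrow> real^7 \<Rightarrow> real^7 \<Rightarrow> 7 \<Rightarrow> real^7" where
  "frm i j l q = (if q = 0 then i else if q = 1 then j else if q = 2 then l else if q = 3 then cross7 i j
     else if q = 4 then cross7 j l else if q = 5 then cross7 l (cross7 i j) else cross7 i l)"

lemma frm_vals: "frm i j l 0 = i" "frm i j l 1 = j" "frm i j l 2 = l" "frm i j l 3 = cross7 i j"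
  "frm i j l 4 = cross7 j l" "frm i j l 5 = cross7 l (cross7 i j)" "frm i j l 6 = cross7 i l"
  by (simp_all add: frm_def)

lemma frm_props:
  assumes ii: "i \<bullet> i = 1" and jj: "j \<bullet> j = 1" and ll: "l \<bullet> l = 1"
    and ij: "i \<bullet> j = 0" and il: "i \<bullet> l = 0" and jl: "j \<bullet> l = 0"
    and kl: "cross7 i j \<bullet> l = 0"
  shows "frm i j l a \<bullet> frm i j l b = (if a = b then 1 else 0)"
    and "cross7 (frm i j l a) (frm i j l b) = lin (frm i j l) (cross_basis a b)"
proof -
  note FF = frame_facts[OF ii jj ll ij il jl refl kl]
  have F: "i \<bullet> i = 1" "i \<bullet> j = 0" "i \<bullet> l = 0" "i \<bullet> (cross7 i j) = 0" "i \<bullet> (cross7 j l) = 0" "i \<bullet> (cross7 l (cross7 i j)) = 0" "i \<bullet> (cross7 i l) = 0" "j \<bullet> i = 0" "j \<bullet> j = 1" "j \<bullet> l = 0" "j \<bullet> (cross7 i j) = 0" "j \<bullet> (cross7 j l) = 0" "j \<bullet> (cross7 l (cross7 i j)) = 0" "j \<bullet> (cross7 i l) = 0" "l \<bullet> i = 0" "l \<bullet> j = 0" "l \<bullet> l = 1" "l \<bullet> (cross7 i j) = 0" "l \<bullet> (cross7 j l) = 0" "l \<bullet> (cross7 l (cross7 i j)) = 0" "l \<bullet> (cross7 i l) = 0" "(cross7 i j) \<bullet> i = 0" "(cross7 i j) \<bullet> j = 0" "(cross7 i j) \<bullet> l = 0" "(cross7 i j) \<bullet> (cross7 i j) = 1"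 "(cross7 i j) \<bullet> (cross7 j l) = 0" "(cross7 i j) \<bullet> (cross7 l (cross7 i j)) = 0" "(cross7 i j) \<bullet> (cross7 i l) = 0" "(cross7 j l) \<bullet> i = 0" "(cross7 j l) \<bullet> j = 0" "(cross7 j l) \<bullet> l = 0" "(cross7 j l) \<bullet> (cross7 i j) = 0" "(cross7 j l) \<bullet> (cross7 j l) = 1" "(cross7 j l) \<bullet> (cross7 l (cross7 i j)) = 0" "(cross7 j l) \<bullet> (cross7 i l) = 0" "(cross7 l (cross7 i j)) \<bullet> i = 0" "(cross7 l (cross7 i j)) \<bullet> j = 0" "(cross7 l (cross7 i j)) \<bullet> l = 0" "(cross7 l (cross7 i j)) \<bullet> (cross7 i j) = 0" "(cross7 l (cross7 i j)) \<bullet> (cross7 j l) = 0" "(cross7 l (cross7 i j)) \<bullet> (cross7 l (cross7 i j)) = 1" "(cross7 l (cross7 i j)) \<bullet> (cross7 i l) = 0" "(cross7 i l) \<bullet> i = 0" "(cross7 i l) \<bullet> j = 0" "(cross7 i l) \<bullet> l = 0" "(cross7 i l) \<bullet> (cross7 i j) = 0" "(cross7 i l) \<bullet> (cross7 j l) = 0" "(cross7 i l) \<bullet> (cross7 l (cross7 i j)) = 0" "(cross7 i l) \<bullet> (cross7 i l) = 1"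
    using FF ii jj ll ij il jl kl by (simp_all add: inner_commute)
  have O: "\<forall>a b. frm i j l a \<bullet> frm i j l b = (if a = b then 1 else 0)"
    unfolding forall7 by (simp add: frm_vals F)
  then show "frm i j l a \<bullet> frm i j l b = (if a = b then 1 else 0)" by blast
  show "cross7 (frm i j l a) (frm i j l b) = lin (frm i j l) (cross_basis a b)"
    by (rule table_gen) (use O in auto, simp_all add: frm_vals FF F)
qed


lemma cross_e: "cross7 (e7 a) (e7 b) = cross_basis a b"
proof -
  have "\<forall>a b. cross7 (e7 a) (e7 b) = cross_basis a b"
    unfolding forall7 by (simp add: vec7_eq cross_cs)
  then show ?thesis by blast
qed

lemma bilinear_cross: "bilinear cross7"
  unfolding bilinear_def
  by (auto intro!: linearI simp: cross_add1 cross_add2 cross_scale1 cross_scale2)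

definition Qm :: "(7 \<Rightarrow> real^7) \<Rightarrow> real^7^7" where
  "Qm g = (\<chi> r q. g q $ r)"

lemma Qm_mult: "Qm g *v v = lin g v"
  by (simp add: Qm_def lin_def vec_eq_iff matrix_vector_mult_def mult.commute)

lemma Qm_orth:
  assumes "\<And>a b. g a \<bullet> g b = (if a = b then 1 else 0)"
  shows "transpose (Qm g) ** Qm g = mat 1" "Qm g ** transpose (Qm g) = mat 1"
proof -
  show a: "transpose (Qm g) ** Qm g = mat 1"
    using assms by (simp add: vec_eq_iff matrix_matrix_mult_def transpose_def Qm_def mat_def inner_vec_def)
  then show "Qm g ** transpose (Qm g) = mat 1" using matrix_left_right_inverse by blast
qed

lemma Basis7: "b \<in> (Basis :: (real^7) set) \<Longrightarrow> \<exists>q. b = e7 q"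
  by (auto simp: Basis_vec_def e7_def)

lemma Qm_cross:
  assumes "\<And>a b. cross7 (g a) (g b) = lin g (cross_basis a b)"
  shows "Qm g *v cross7 u v = cross7 (Qm g *v u) (Qm g *v v)"
proof -
  have "(\<lambda>u v. Qm g *v cross7 u v) = (\<lambda>u v. cross7 (Qm g *v u) (Qm g *v v))"
  proof (rule bilinear_eq_stdbasis)
    show "bilinear (\<lambda>u v. Qm g *v cross7 u v)"
      using bilinear_cross unfolding bilinear_def
      by (auto intro!: linearI simp: cross_add1 cross_add2 cross_scale1 cross_scale2 matrix_vector_right_distrib
          matrix_vector_mult_scaleR)
    show "bilinear (\<lambda>u v. cross7 (Qm g *v u) (Qm g *v v))"
      unfolding bilinear_def
      by (auto intro!: linearI simp: cross_add1 cross_add2 cross_scale1 cross_scale2 matrix_vector_right_distrib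
          matrix_vector_mult_scaleR)
    fix x y :: "real^7" assume "x \<in> Basis" "y \<in> Basis"
    then obtain a b where "x = e7 a" "y = e7 b" using Basis7 by blast
    then show "Qm g *v cross7 x y = cross7 (Qm g *v x) (Qm g *v y)"
      by (simp add: cross_e Qm_mult lin_e assms)
  qed
  then show ?thesis by metis
qed


(* ---- from PartD.thy ---- *)

declare transpose_matrix_vector[simp del]

definition cnj :: "real^7^7 \<Rightarrow> real^7^7 \<Rightarrow> real^7^7" where
  "cnj Q A = Q ** A ** transpose Q"

lemma cnj_mv: "cnj Q A *v x = Q *v (A *v (transpose Q *v x))"
  by (simp add: cnj_def matrix_vector_mul_assoc matrix_mul_assoc)

context
  fixes Q :: "real^7^7"
  assumes QtQ: "transpose Q ** Q = mat 1" and QQt: "Q ** transpose Q = mat 1"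
begin

lemma QtQv[simp]: "transpose Q *v (Q *v w) = w"
  by (simp add: matrix_vector_mul_assoc QtQ)
lemma QQtv[simp]: "Q *v (transpose Q *v w) = w"
  by (simp add: matrix_vector_mul_assoc QQt)

lemma Q_inj: "Q *v a = Q *v b \<longleftrightarrow> a = b"
  by (metis QtQv)

lemma cnj_eq: "cnj Q A = cnj Q B \<longleftrightarrow> A = B"
proof
  assume "cnj Q A = cnj Q B"
  then have "\<forall>x. cnj Q A *v x = cnj Q B *v x" by simp
  then have "\<forall>x. A *v x = B *v x" by (metis cnj_mv QtQv)
  then show "A = B" by (simp add: matrix_eq)
qed simp

lemma cnj_mult: "cnj Q (A ** B) = cnj Q A ** cnj Q B"
  by (subst matrix_eq) (simp add: cnj_mv matrix_vector_mul_assoc[symmetric])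
lemma cnj_add: "cnj Q (A + B) = cnj Q A + cnj Q B"
  by (subst matrix_eq) (simp add: cnj_mv mult_add_mv matrix_vector_right_distrib)
lemma cnj_diff: "cnj Q (A - B) = cnj Q A - cnj Q B"
  by (subst matrix_eq) (simp add: cnj_mv matrix_vector_mult_diff_rdistrib matrix_vector_mult_diff_distrib)
lemma cnj_scale: "cnj Q (c *\<^sub>R A) = c *\<^sub>R cnj Q A"
  by (subst matrix_eq) (simp add: cnj_mv scaleR_matrix_vector_assoc[symmetric] matrix_scaleR_vector_ac[symmetric]
      matrix_vector_mult_scaleR)
lemma cnj_transpose: "transpose (cnj Q A) = cnj Q (transpose A)"
  by (simp add: cnj_def matrix_transpose_mul matrix_mul_assoc)
lemma cnj_trace: "trace (cnj Q A) = trace A"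
proof -
  have "trace (cnj Q A) = trace (Q ** (A ** transpose Q))" by (simp add: cnj_def matrix_mul_assoc)
  also have "\<dots> = trace ((A ** transpose Q) ** Q)" by (rule trace_mul_sym)
  also have "\<dots> = trace A" by (simp add: matrix_mul_assoc[symmetric] QtQ)
  finally show ?thesis .
qed
lemma cnj_bracket: "cnj Q (bracket A B) = bracket (cnj Q A) (cnj Q B)"
  by (simp add: bracket_def cnj_diff cnj_mult)
lemma cnj_cnj': "cnj Q (cnj (transpose Q) A) = A"
  by (subst matrix_eq) (simp add: cnj_mv)
lemma cnj'_cnj: "cnj (transpose Q) (cnj Q A) = A"
  by (subst matrix_eq) (simp add: cnj_mv)

lemma TGr_transport: "cnj Q e \<in> TGr3 (cnj Q P) \<longleftrightarrow> e \<in> TGr3 P"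
proof -
  have "cnj Q e ** cnj Q P + cnj Q P ** cnj Q e = cnj Q e \<longleftrightarrow> e ** P + P ** e = e"
    by (simp only: cnj_mult[symmetric] cnj_add[symmetric] cnj_eq)
  moreover have "transpose (cnj Q e) = cnj Q e \<longleftrightarrow> transpose e = e"
    by (simp only: cnj_transpose cnj_eq)
  ultimately show ?thesis by (simp add: TGr3_def cnj_trace)
qed

lemma range_cnj: "x \<in> range ((*v) (cnj Q P)) \<longleftrightarrow> transpose Q *v x \<in> range ((*v) P)"
proof
  assume "x \<in> range ((*v) (cnj Q P))"
  then obtain z where "x = cnj Q P *v z" by blast
  then have "transpose Q *v x = P *v (transpose Q *v z)" by (simp add: cnj_mv)
  then show "transpose Q *v x \<in> range ((*v) P)" by (simp add: range_eqI)
next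
  assume "transpose Q *v x \<in> range ((*v) P)"
  then obtain z where "transpose Q *v x = P *v z" by blast
  then have "x = cnj Q P *v (Q *v z)" by (metis QQtv QtQv cnj_mv)
  then show "x \<in> range ((*v) (cnj Q P))" by (simp add: range_eqI)
qed

lemma TMS_transport:
  assumes Qc: "\<And>u v. Q *v cross7 u v = cross7 (Q *v u) (Q *v v)"
  shows "cnj Q e \<in> TMS' (cnj Q P) \<longleftrightarrow> e \<in> TMS' P"
proof -
  have Qt: "transpose Q *v cross7 u v = cross7 (transpose Q *v u) (transpose Q *v v)" for u v
    by (metis QQtv Qc QtQv)
  have "(\<forall>x\<in>range ((*v) (cnj Q P)). \<forall>y\<in>range ((*v) (cnj Q P)).
      cnj Q e *v (cross7 x y) = cross7 (cnj Q e *v x) y + cross7 x (cnj Q e *v y)) \<longleftrightarrow>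
    (\<forall>x\<in>range ((*v) P). \<forall>y\<in>range ((*v) P). e *v (cross7 x y) = cross7 (e *v x) y + cross7 x (e *v y))"
  proof
    assume H: "\<forall>x\<in>range ((*v) (cnj Q P)). \<forall>y\<in>range ((*v) (cnj Q P)).
      cnj Q e *v (cross7 x y) = cross7 (cnj Q e *v x) y + cross7 x (cnj Q e *v y)"
    show "\<forall>x\<in>range ((*v) P). \<forall>y\<in>range ((*v) P). e *v (cross7 x y) = cross7 (e *v x) y + cross7 x (e *v y)"
    proof (intro ballI)
      fix x y assume hx: "x \<in> range ((*v) P)" and hy: "y \<in> range ((*v) P)"
      have "Q *v x \<in> range ((*v) (cnj Q P))" "Q *v y \<in> range ((*v) (cnj Q P))"
        using hx hy by (simp_all add: range_cnj)
      then have "cnj Q e *v (cross7 (Q *v x) (Q *v y)) = cross7 (cnj Q e *v (Q *v x)) (Q *v y) + cross7 (Q *v x) (cnj Q e *v (Q *v y))"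
        using H by blast
      then have "Q *v (e *v cross7 x y) = Q *v (cross7 (e *v x) y + cross7 x (e *v y))"
        by (simp add: cnj_mv Qc[symmetric] matrix_vector_right_distrib)
      then show "e *v (cross7 x y) = cross7 (e *v x) y + cross7 x (e *v y)" by (simp only: Q_inj)
    qed
  next
    assume H: "\<forall>x\<in>range ((*v) P). \<forall>y\<in>range ((*v) P). e *v (cross7 x y) = cross7 (e *v x) y + cross7 x (e *v y)"
    show "\<forall>x\<in>range ((*v) (cnj Q P)). \<forall>y\<in>range ((*v) (cnj Q P)).
      cnj Q e *v (cross7 x y) = cross7 (cnj Q e *v x) y + cross7 x (cnj Q e *v y)"
    proof (intro ballI)
      fix x y assume hx: "x \<in> range ((*v) (cnj Q P))" and hy: "y \<in> range ((*v) (cnj Q P))"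
      then have "transpose Q *v x \<in> range ((*v) P)" "transpose Q *v y \<in> range ((*v) P)"
        by (simp_all add: range_cnj)
      then have E: "e *v cross7 (transpose Q *v x) (transpose Q *v y) =
          cross7 (e *v (transpose Q *v x)) (transpose Q *v y) + cross7 (transpose Q *v x) (e *v (transpose Q *v y))"
        using H by blast
      have "cnj Q e *v (cross7 x y) = Q *v (e *v cross7 (transpose Q *v x) (transpose Q *v y))"
        by (simp add: cnj_mv Qt)
      also have "\<dots> = cross7 (cnj Q e *v x) y + cross7 x (cnj Q e *v y)"
        by (simp add: E cnj_mv matrix_vector_right_distrib Qc)
      finally show "cnj Q e *v (cross7 x y) = cross7 (cnj Q e *v x) y + cross7 x (cnj Q e *v y)" .
    qed
  qed
  then show ?thesis using TGr_transport[of e P] by (simp add: TMS'_def)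
qed
end

(* ---- from w/Scratch.thy ---- *)

declare transpose_matrix_vector[simp del]

lemma vec4_eq: "(x::real^4) = y \<longleftrightarrow> x$0 = y$0 \<and> x$1 = y$1 \<and> x$2 = y$2 \<and> x$3 = y$3"
proof -
  have U: "(UNIV::4 set) = {0,1,2,3}"
  proof -
    have "x \<in> {0,1,2,3}" for x :: 4
    proof (rule bit0.cases[of x])
      fix z :: int assume h: "x = of_int z" "0 \<le> z" "z < int CARD(4)"
      then have "z = 0 \<or> z = 1 \<or> z = 2 \<or> z = 3" by simp arith
      then show ?thesis using h by auto
    qed
    then show ?thesis by auto
  qed
  have F: "(\<forall>c::4. P c) \<longleftrightarrow> P 0 \<and> P 1 \<and> P 2 \<and> P 3" for P
    by (metis U UNIV_I empty_iff insert_iff)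
  show ?thesis by (simp add: vec_eq_iff F)
qed

lemma coefA_vecA: "coefA (vecA a) = a"
  by (simp add: vec4_eq coefA_c vecA_def)

lemma Mk_add: "Mk (a + a') (b + b') = Mk a b + Mk a' b'"
  by (rule cols_eq7) (simp_all add: mult_add_mv vec7_eq Mk_cs)
lemma Mk_scale: "Mk (c *\<^sub>R a) (c *\<^sub>R b) = c *\<^sub>R Mk a b"
  by (rule cols_eq7) (simp_all add: scaleR_matrix_vector_assoc[symmetric] vec7_eq Mk_cs algebra_simps)

lemma TMS0_eq: "TMS' p0 = range (\<lambda>(a,b). Mk a b)"
proof
  show "TMS' p0 \<subseteq> range (\<lambda>(a,b). Mk a b)"
  proof
    fix d assume "d \<in> TMS' p0"
    then have "d = (\<lambda>(a,b). Mk a b) (coefA (d *v e7 0), coefA (d *v e7 1))" using TMS0_char by simp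
    then show "d \<in> range (\<lambda>(a,b). Mk a b)" by blast
  qed
  show "range (\<lambda>(a,b). Mk a b) \<subseteq> TMS' p0" using Mk_TMS by auto
qed

lemma tQrow: "transpose (Qm g) $ q = g q"
  by (simp add: vec_eq_iff transpose_def Qm_def)


theorem mainTheorem16:
  fixes p :: "real^7^7" and i j k l :: "real^7"
  assumes hp: "p \<in> MS'"
    and hi: "i \<in> range ((*v) p)" and hj: "j \<in> range ((*v) p)"
    and horth: "i \<bullet> i = 1" "j \<bullet> j = 1" "i \<bullet> j = 0"
    and hk: "k = cross7 i j"
    and hl: "\<forall>x\<in>range ((*v) p). l \<bullet> x = 0" and hl1: "l \<bullet> l = 1"
  shows "(\<forall>a0 a1 a2 a3 b0 b1 b2 b3 :: real.
            \<exists>!d. d \<in> TMS' p \<and>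
              d *v i = a0 *\<^sub>R l + a1 *\<^sub>R cross7 i l + a2 *\<^sub>R cross7 j l + a3 *\<^sub>R cross7 k l \<and>
              d *v j = b0 *\<^sub>R l + b1 *\<^sub>R cross7 i l + b2 *\<^sub>R cross7 j l + b3 *\<^sub>R cross7 k l)
         \<and> subspace (TMS' p) \<and> dim (TMS' p) = 8
         \<and> lie_triple_subsystem (TMS' p) (TGr3 p)"
proof -
  have pG: "p \<in> Gr3" and Om: "\<And>x y z. Omega7 (p *v x) (p *v y) ((mat 1 - p) *v z) = 0"
    using hp by (auto simp: MS'_def)
  have pp: "p ** p = p" and pt: "transpose p = p" and ptr: "trace p = 3"
    using pG by (auto simp: Gr3_def)
  have pidem: "p *v (p *v x) = p *v x" for x by (simp add: matrix_vector_mul_assoc pp)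
  have psym: "(p *v x) \<bullet> y = x \<bullet> (p *v y)" for x y
  proof -
    have "x v* p = p *v x" using transpose_matrix_vector[of p x] pt by simp
    then show ?thesis by (metis dot_lmul_matrix)
  qed
  have inV: "p *v x = x" if "x \<in> range ((*v) p)" for x
    using that pidem by blast
  have clos: "p *v cross7 x y = cross7 x y" if hx: "x \<in> range ((*v) p)" and hy: "y \<in> range ((*v) p)" for x y
  proof -
    obtain x' y' where xy: "x = p *v x'" "y = p *v y'" using hx hy by blast
    define w where "w = cross7 x y"
    have h: "w \<bullet> (z - p *v z) = 0" for z
      using Om[of x' y' z] by (simp add: Omega7_def matrix_vector_mult_diff_rdistrib xy w_def)
    have h1: "w \<bullet> w - w \<bullet> (p *v w) = 0" using h[of w] by (simp add: inner_diff_right)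
    have h2: "(p *v w) \<bullet> (p *v w) = w \<bullet> (p *v w)" using psym[of w "p *v w"] by (simp add: pidem)
    have "(w - p *v w) \<bullet> (w - p *v w) = 0"
      using h1 h2 by (simp add: inner_diff_left inner_diff_right inner_commute)
    then show ?thesis by (simp add: w_def)
  qed
  have pi: "p *v i = i" using inV[OF hi] .
  have pj: "p *v j = j" using inV[OF hj] .
  have pk: "p *v k = k" using clos[OF hi hj] hk by simp
  have kV: "k \<in> range ((*v) p)" using pk by (metis rangeI)
  have li: "l \<bullet> i = 0" and lj: "l \<bullet> j = 0" and lk: "l \<bullet> k = 0"
    using hl hi hj kV by blast+
  have il: "i \<bullet> l = 0" and jl: "j \<bullet> l = 0" and kl': "cross7 i j \<bullet> l = 0"
    using li lj lk hk by (simp_all add: inner_commute)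
  define g where "g = frm i j l"
  note FP = frm_props[OF horth(1) horth(2) hl1 horth(3) il jl kl']
  have gO: "\<And>a b. g a \<bullet> g b = (if a = b then 1 else 0)" using FP(1) by (simp add: g_def)
  have gC: "\<And>a b. cross7 (g a) (g b) = lin g (cross_basis a b)" using FP(2) by (simp add: g_def)
  have gv: "g 0 = i" "g 1 = j" "g 2 = l" "g 3 = k" "g 4 = cross7 j l" "g 5 = cross7 l k" "g 6 = cross7 i l"
    by (simp_all add: g_def frm_vals hk)
  define Q where "Q = Qm g"
  have QtQ: "transpose Q ** Q = mat 1" and QQt: "Q ** transpose Q = mat 1"
    using Qm_orth[OF gO] by (simp_all add: Q_def)
  have Qc: "\<And>u v. Q *v cross7 u v = cross7 (Q *v u) (Q *v v)"
    using Qm_cross[OF gC] by (simp add: Q_def)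
  have Qe: "Q *v e7 q = g q" for q by (simp add: Q_def Qm_mult lin_e)
  have trg: "trace p = (\<Sum>q\<in>UNIV. g q \<bullet> (p *v g q))"
  proof -
    have "trace p = trace (p ** (Q ** transpose Q))" using QQt by simp
    also have "\<dots> = trace ((p ** Q) ** transpose Q)" by (simp add: matrix_mul_assoc)
    also have "\<dots> = trace (transpose Q ** (p ** Q))" by (rule trace_mul_sym)
    also have "\<dots> = (\<Sum>q\<in>UNIV. g q \<bullet> (p *v g q))"
    proof -
      have "(transpose Q ** (p ** Q))$q$q = g q \<bullet> (p *v g q)" for q
      proof -
        have "(transpose Q ** (p ** Q))$q$q = ((transpose Q ** (p ** Q)) *v e7 q)$q" by (simp add: col7)
        also have "\<dots> = (transpose Q *v (p *v g q))$q" by (simp add: matrix_vector_mul_assoc[symmetric] Qe)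
        also have "\<dots> = g q \<bullet> (p *v g q)" by (simp add: matrix_vector_mul_component Q_def tQrow)
        finally show ?thesis .
      qed
      then show ?thesis by (simp add: trace_def)
    qed
    finally show ?thesis .
  qed
  have nn: "g q \<bullet> (p *v g q) = (p *v g q) \<bullet> (p *v g q)" for q
    using psym[of "g q" "p *v g q"] by (simp add: pidem)
  have sum3: "g 2 \<bullet> (p *v g 2) + g 4 \<bullet> (p *v g 4) + g 5 \<bullet> (p *v g 5) + g 6 \<bullet> (p *v g 6) = 0"
    using trg ptr by (simp add: sum7 gv pi pj pk horth hk[symmetric] FP(1)[of 3 3, unfolded g_def[symmetric] gv])
  have pg0: "p *v g 2 = 0" "p *v g 4 = 0" "p *v g 5 = 0" "p *v g 6 = 0"
  proof -
    have nn2: "0 \<le> g q \<bullet> (p *v g q)" for q by (simp add: nn)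
    have "g 2 \<bullet> (p *v g 2) = 0" "g 4 \<bullet> (p *v g 4) = 0" "g 5 \<bullet> (p *v g 5) = 0" "g 6 \<bullet> (p *v g 6) = 0"
      using sum3 nn2[of 2] nn2[of 4] nn2[of 5] nn2[of 6] by linarith+
    then show "p *v g 2 = 0" "p *v g 4 = 0" "p *v g 5 = 0" "p *v g 6 = 0" by (simp_all add: nn)
  qed
  have pQ: "p ** Q = Q ** p0"
    by (rule cols_eq7) (simp_all add: matrix_vector_mul_assoc[symmetric] Qe p0_e pg0[unfolded gv] gv pi pj pk)
  have pc: "cnj Q p0 = p"
  proof -
    have "cnj Q p0 = (p ** Q) ** transpose Q" by (simp add: cnj_def pQ)
    also have "\<dots> = p" by (simp add: matrix_mul_assoc[symmetric] QQt)
    finally show ?thesis .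
  qed
  have QtQ': "transpose (transpose Q) ** transpose Q = mat 1" and QQt': "transpose Q ** transpose (transpose Q) = mat 1"
    using QtQ QQt by simp_all
  have TR: "d \<in> TMS' p \<longleftrightarrow> cnj (transpose Q) d \<in> TMS' p0" for d
    using TMS_transport[OF QtQ QQt Qc, of "cnj (transpose Q) d" p0] by (simp add: pc cnj_cnj'[OF QtQ QQt])
  define G where "G z = cnj Q (Mk (fst z) (snd z))" for z :: "(real^4) \<times> (real^4)"
  have TMSp: "TMS' p = range G"
  proof (intro equalityI subsetI)
    fix d assume "d \<in> TMS' p"
    then have "cnj (transpose Q) d \<in> TMS' p0" using TR by blast
    then obtain a b where ab: "cnj (transpose Q) d = Mk a b" using TMS0_eq by auto
    have "d = cnj Q (cnj (transpose Q) d)" by (simp add: cnj_cnj'[OF QtQ QQt])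
    then have "d = G (a,b)" by (simp add: G_def ab)
    then show "d \<in> range G" by blast
  next
    fix d assume "d \<in> range G"
    then obtain z where "d = G z" by blast
    then have "cnj (transpose Q) d = Mk (fst z) (snd z)" by (simp add: G_def cnj'_cnj[OF QtQ QQt])
    then show "d \<in> TMS' p" using TR Mk_TMS by simp
  qed
  have linG: "linear G"
    by (rule linearI) (simp_all add: G_def Mk_add Mk_scale cnj_add[OF QtQ QQt] cnj_scale[OF QtQ QQt])
  have injG: "inj G"
  proof (rule injI)
    fix x y assume "G x = G y"
    then have M: "Mk (fst x) (snd x) = Mk (fst y) (snd y)" by (simp add: G_def cnj_eq[OF QtQ QQt])
    have "vecA (fst x) = vecA (fst y)" using arg_cong[OF M, of "\<lambda>M. M *v e7 0"] by (simp add: Mk_e0)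
    then have 1: "fst x = fst y" by (metis coefA_vecA)
    have "vecA (snd x) = vecA (snd y)" using arg_cong[OF M, of "\<lambda>M. M *v e7 1"] by (simp add: Mk_e1)
    then have 2: "snd x = snd y" by (metis coefA_vecA)
    show "x = y" using 1 2 by (simp add: prod_eq_iff)
  qed
  have sub: "subspace (TMS' p)" unfolding TMSp by (rule linear_subspace_image[OF linG subspace_UNIV])
  have dim8: "dim (TMS' p) = 8"
  proof -
    have "inj_on G (span UNIV)" using injG by (simp add: inj_on_def inj_def)
    then have "dim (TMS' p) = dim (UNIV :: ((real^4) \<times> (real^4)) set)"
      unfolding TMSp by (rule eucl.dim_image_eq[OF linG])
    then show ?thesis by simp
  qed
  have LT: "lie_triple_subsystem (TMS' p) (TGr3 p)"
    unfolding lie_triple_subsystem_def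
  proof (intro conjI ballI)
    show "subspace (TMS' p)" by (rule sub)
    show "TMS' p \<subseteq> TGr3 p" by (auto simp: TMS'_def)
    fix d1 d2 d3 assume h: "d1 \<in> TMS' p" "d2 \<in> TMS' p" "d3 \<in> TMS' p"
    have "bracket (bracket (cnj (transpose Q) d1) (cnj (transpose Q) d2)) (cnj (transpose Q) d3) \<in> TMS' p0"
      using LT0 h TR by blast
    then have "cnj (transpose Q) (bracket (bracket d1 d2) d3) \<in> TMS' p0"
      by (simp add: cnj_bracket[OF QtQ' QQt'])
    then show "bracket (bracket d1 d2) d3 \<in> TMS' p" using TR by blast
  qed
  have Qi: "transpose Q *v i = e7 0" and Qj: "transpose Q *v j = e7 1"
    using QtQv[OF QtQ QQt, of "e7 0"] QtQv[OF QtQ QQt, of "e7 1"] by (simp_all add: Qe gv)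
  have EU: "\<exists>!d. d \<in> TMS' p \<and>
              d *v i = a0 *\<^sub>R l + a1 *\<^sub>R cross7 i l + a2 *\<^sub>R cross7 j l + a3 *\<^sub>R cross7 k l \<and>
              d *v j = b0 *\<^sub>R l + b1 *\<^sub>R cross7 i l + b2 *\<^sub>R cross7 j l + b3 *\<^sub>R cross7 k l"
    for a0 a1 a2 a3 b0 b1 b2 b3 :: real
  proof -
    define A :: "real^4" where "A = (\<chi> q. if q = 0 then a0 else if q = 1 then a1 else if q = 2 then a2 else a3)"
    define B :: "real^4" where "B = (\<chi> q. if q = 0 then b0 else if q = 1 then b1 else if q = 2 then b2 else b3)"
    have lk': "cross7 l k = - cross7 k l" by (rule cross_anti)
    have vA: "Q *v vecA A = a0 *\<^sub>R l + a1 *\<^sub>R cross7 i l + a2 *\<^sub>R cross7 j l + a3 *\<^sub>R cross7 k l"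
      by (simp add: vecA_def A_def matrix_vector_right_distrib matrix_vector_mult_diff_distrib
          matrix_vector_mult_scaleR Qe gv lk')
    have vB: "Q *v vecA B = b0 *\<^sub>R l + b1 *\<^sub>R cross7 i l + b2 *\<^sub>R cross7 j l + b3 *\<^sub>R cross7 k l"
      by (simp add: vecA_def B_def matrix_vector_right_distrib matrix_vector_mult_diff_distrib
          matrix_vector_mult_scaleR Qe gv lk')
    show ?thesis
    proof (rule ex1I[of _ "G (A,B)"])
      have "G (A,B) \<in> TMS' p" using TMSp by blast
      moreover have "G (A,B) *v i = Q *v vecA A" by (simp add: G_def cnj_mv Qi Mk_e0)
      moreover have "G (A,B) *v j = Q *v vecA B" by (simp add: G_def cnj_mv Qj Mk_e1)
      ultimately show "G (A,B) \<in> TMS' p \<and>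
              G (A,B) *v i = a0 *\<^sub>R l + a1 *\<^sub>R cross7 i l + a2 *\<^sub>R cross7 j l + a3 *\<^sub>R cross7 k l \<and>
              G (A,B) *v j = b0 *\<^sub>R l + b1 *\<^sub>R cross7 i l + b2 *\<^sub>R cross7 j l + b3 *\<^sub>R cross7 k l"
        using vA vB by simp
    next
      fix d assume hd: "d \<in> TMS' p \<and>
              d *v i = a0 *\<^sub>R l + a1 *\<^sub>R cross7 i l + a2 *\<^sub>R cross7 j l + a3 *\<^sub>R cross7 k l \<and>
              d *v j = b0 *\<^sub>R l + b1 *\<^sub>R cross7 i l + b2 *\<^sub>R cross7 j l + b3 *\<^sub>R cross7 k l"
      define e where "e = cnj (transpose Q) d"
      have eT: "e \<in> TMS' p0" using hd TR by (simp add: e_def)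
      have Qi': "Q *v e7 0 = i" and Qj': "Q *v e7 1 = j" by (simp_all add: Qe gv)
      have e0: "e *v e7 0 = vecA A"
      proof -
        have "e *v e7 0 = transpose Q *v (d *v i)" by (simp add: e_def cnj_mv Qi')
        also have "\<dots> = transpose Q *v (Q *v vecA A)" using hd vA by simp
        also have "\<dots> = vecA A" by (simp add: QtQv[OF QtQ QQt])
        finally show ?thesis .
      qed
      have e1: "e *v e7 1 = vecA B"
      proof -
        have "e *v e7 1 = transpose Q *v (d *v j)" by (simp add: e_def cnj_mv Qj')
        also have "\<dots> = transpose Q *v (Q *v vecA B)" using hd vB by simp
        also have "\<dots> = vecA B" by (simp add: QtQv[OF QtQ QQt])
        finally show ?thesis .
      qed
      have "e = Mk A B" using TMS0_char[OF eT] by (simp add: e0 e1 coefA_vecA)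
      then have "d = cnj Q (Mk A B)" using cnj_cnj'[OF QtQ QQt, of d] by (simp add: e_def)
      then show "d = G (A,B)" by (simp add: G_def)
    qed
  qed
  show ?thesis using EU sub dim8 LT by blast
qed

end
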